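(* Assume the setting and notation described in the context, and suppose the event $\mathcal{E}$ holds. Let $\gamma\in(0,1)$ and let $k'\ge k$ be an integer. Let $\mathbf{w}^{(0)}$ be the output $\hat{\mathbf{v}}$ of the SEP algorithm, and suppose its final support $S^{(k)}$ satisfies $\|\mathbf{v}_{S^{(k)}}\|_2\ge\sqrt{\gamma}$. Let $\mathbf{w}^{(T)}$ be the $T$-th iterate of the TPower refinement with keep-$k'$ thresholding started from $\mathbf{w}^{(0)}$. There exist absolute constants $C_1,C_2>0$ such that if $$ m\ \ge\ C_1\frac{(1+\theta)^2}{\theta^2\gamma^2}k'\log n, $$ then $$ \sin\angle\big(\mathbf{w}^{(T)},\mathbf{v}\big)\ \le\ C_2\frac{1+\theta}{\theta\gamma}\sqrt{\frac{k'\log n}{m}}\qquad\text{for all } T\ge 1. $$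
   Context: Let $n\ge 2$, $m\ge 1$, $\theta>0$, $k\in\{1,\dots,n\}$. Let $\mathbf{v}\in\mathbb{R}^n$ with $\|\mathbf{v}\|_2=1$ and at most $k$ nonzero entries. Let $\mathbf{x}_1,\dots,\mathbf{x}_m$ be i.i.d. $\mathcal{N}(\mathbf{0},\mathbf{I}_n+\theta\mathbf{v}\mathbf{v}^\top)$. Put $\hat{\boldsymbol{\Sigma}}=\frac1m\sum_i\mathbf{x}_i\mathbf{x}_i^\top$, $\hat{\boldsymbol{\Gamma}}=\hat{\boldsymbol{\Sigma}}-\mathbf{I}_n$, $\mathbf{W}=\hat{\boldsymbol{\Gamma}}-\theta\mathbf{v}\mathbf{v}^\top$. $\mathbf{A}_{S,U}$ denotes a submatrix, $\mathbf{v}_S$ the restriction of $\mathbf{v}$ to $S\subseteq[n]$; $\|\cdot\|_2$ is the Euclidean/spectral norm. For unit vectors, $\sin\angle(\mathbf{a},\mathbf{b})=\sqrt{1-\langle\mathbf{a},\mathbf{b}\rangle^2}$. Fix an absolute constant $C_0>0$; the event $\mathcal{E}$ is: for all $p\in[n]$ and all $S\subseteq[n]$ with $|S|=p$, $\|\mathbf{W}_{S,S}\|_2\le C_0(1+\theta)\sqrt{p\log n/m}$. "Absolute constant" means independent of $n,m,k,k',\theta,\mathbf{v},\gamma,T$. SEP algorithm: $S^{(1)}=\{j^\ast\}$ with $j^\ast$ maximizing $|\hat{\boldsymbol{\Gamma}}_{jj}|$; for $p=1,\dots,k-1$, $\hat{\mathbf{e}}^{(p)}$ is a unit top eigenvector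 (largest eigenvalue) of $\hat{\boldsymbol{\Gamma}}_{S^{(p)},S^{(p)}}$ zero-padded to $\mathbb{R}^n$, and $S^{(p+1)}$ is the index set of the $p+1$ largest entries of $|\hat{\boldsymbol{\Gamma}}\hat{\mathbf{e}}^{(p)}|$; output $\hat{\mathbf{v}}$ is a unit top eigenvector of $\hat{\boldsymbol{\Gamma}}_{S^{(k)},S^{(k)}}$ zero-padded to $\mathbb{R}^n$. TPower refinement with keep-$k'$ thresholding: $\mathbf{w}^{(t+1)}=\mathcal{H}_{k'}(\hat{\boldsymbol{\Gamma}}\mathbf{w}^{(t)})/\|\mathcal{H}_{k'}(\hat{\boldsymbol{\Gamma}}\mathbf{w}^{(t)})\|_2$, where $\mathcal{H}_{k'}$ keeps the $k'$ largest-magnitude entries of a vector and sets the others to zero. *)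

theory Defs
  imports Complex_Main
begin

text \<open>Vectors in R^n are functions nat => real (coordinates 0..n-1 used);
  n x n matrices are functions nat => nat => real. Dimensions are explicit
  because the absolute constants must be uniform in n.\<close>

definition vnorm :: "nat \<Rightarrow> (nat \<Rightarrow> real) \<Rightarrow> real" where
  "vnorm n u = sqrt (\<Sum>i<n. (u i)\<^sup>2)"

definition vdot :: "nat \<Rightarrow> (nat \<Rightarrow> real) \<Rightarrow> (nat \<Rightarrow> real) \<Rightarrow> real" where
  "vdot n a b = (\<Sum>i<n. a i * b i)"

definition matvec :: "nat \<Rightarrow> (nat \<Rightarrow> nat \<Rightarrow> real) \<Rightarrow> (nat \<Rightarrow> real) \<Rightarrow> (nat \<Rightarrow> real)" where
  "matvec n A u = (\<lambda>i. \<Sum>j<n. A i j * u j)"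

definition restr_norm :: "nat set \<Rightarrow> (nat \<Rightarrow> real) \<Rightarrow> real" where
  "restr_norm S u = sqrt (\<Sum>i\<in>S. (u i)\<^sup>2)"

definition sub_spec_norm :: "(nat \<Rightarrow> nat \<Rightarrow> real) \<Rightarrow> nat set \<Rightarrow> real" where
  "sub_spec_norm A S =
     Sup {sqrt (\<Sum>i\<in>S. (\<Sum>j\<in>S. A i j * u j)\<^sup>2) | u. (\<Sum>j\<in>S. (u j)\<^sup>2) = 1}"

definition Gamma_hat :: "nat \<Rightarrow> (nat \<Rightarrow> nat \<Rightarrow> real) \<Rightarrow> (nat \<Rightarrow> nat \<Rightarrow> real)" where
  "Gamma_hat m x = (\<lambda>j l. (1 / real m) * (\<Sum>i<m. x i j * x i l) - (if j = l then 1 else 0))"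

definition W_mat :: "nat \<Rightarrow> (nat \<Rightarrow> nat \<Rightarrow> real) \<Rightarrow> real \<Rightarrow> (nat \<Rightarrow> real) \<Rightarrow> (nat \<Rightarrow> nat \<Rightarrow> real)" where
  "W_mat m x \<theta> v = (\<lambda>j l. Gamma_hat m x j l - \<theta> * v j * v l)"

definition event_E :: "real \<Rightarrow> nat \<Rightarrow> nat \<Rightarrow> real \<Rightarrow> (nat \<Rightarrow> nat \<Rightarrow> real) \<Rightarrow> bool" where
  "event_E C0 n m \<theta> W \<longleftrightarrow>
     (\<forall>p\<in>{1..n}. \<forall>S. S \<subseteq> {..<n} \<and> card S = p \<longrightarrow>
        sub_spec_norm W S \<le> C0 * (1 + \<theta>) * sqrt (real p * ln (real n) / real m))"

definition sub_eigenpair :: "(nat \<Rightarrow> nat \<Rightarrow> real) \<Rightarrow> nat set \<Rightarrow> real \<Rightarrow> (nat \<Rightarrow> real) \<Rightarrow> bool" where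
  "sub_eigenpair A S lam u \<longleftrightarrow>
     (\<forall>j. j \<notin> S \<longrightarrow> u j = 0) \<and> (\<exists>j\<in>S. u j \<noteq> 0) \<and>
     (\<forall>i\<in>S. (\<Sum>j\<in>S. A i j * u j) = lam * u i)"

definition top_sub_eigvec :: "(nat \<Rightarrow> nat \<Rightarrow> real) \<Rightarrow> nat set \<Rightarrow> (nat \<Rightarrow> real) \<Rightarrow> bool" where
  "top_sub_eigvec A S u \<longleftrightarrow>
     (\<Sum>j\<in>S. (u j)\<^sup>2) = 1 \<and>
     (\<exists>lam. sub_eigenpair A S lam u \<and> (\<forall>lam' u'. sub_eigenpair A S lam' u' \<longrightarrow> lam' \<le> lam))"

text \<open>T is an index set of the r largest-magnitude entries of y (in [n]); ties broken arbitrarily.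
  If r > n all n indices are kept.\<close>
definition top_set :: "nat \<Rightarrow> nat \<Rightarrow> (nat \<Rightarrow> real) \<Rightarrow> nat set \<Rightarrow> bool" where
  "top_set n r y T \<longleftrightarrow>
     T \<subseteq> {..<n} \<and> card T = min r n \<and>
     (\<forall>i\<in>T. \<forall>j\<in>{..<n} - T. \<bar>y j\<bar> \<le> \<bar>y i\<bar>)"

definition SEP_run :: "nat \<Rightarrow> nat \<Rightarrow> (nat \<Rightarrow> nat \<Rightarrow> real) \<Rightarrow> (nat \<Rightarrow> nat set) \<Rightarrow>
     (nat \<Rightarrow> nat \<Rightarrow> real) \<Rightarrow> (nat \<Rightarrow> real) \<Rightarrow> bool" where
  "SEP_run n k G S e vhat \<longleftrightarrow>
     (\<exists>js<n. (\<forall>j<n. \<bar>G j j\<bar> \<le> \<bar>G js js\<bar>) \<and> S 1 = {js}) \<and>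
     (\<forall>p\<in>{1..k-1}. top_sub_eigvec G (S p) (e p) \<and>
                     top_set n (p + 1) (\<lambda>i. matvec n G (e p) i) (S (p + 1))) \<and>
     top_sub_eigvec G (S k) vhat"

definition hard_thr :: "nat set \<Rightarrow> (nat \<Rightarrow> real) \<Rightarrow> (nat \<Rightarrow> real)" where
  "hard_thr T y = (\<lambda>i. if i \<in> T then y i else 0)"

definition TPower_run :: "nat \<Rightarrow> nat \<Rightarrow> (nat \<Rightarrow> nat \<Rightarrow> real) \<Rightarrow> (nat \<Rightarrow> nat \<Rightarrow> real) \<Rightarrow> bool" where
  "TPower_run n k' G w \<longleftrightarrow>
     (\<forall>t. \<exists>T. top_set n k' (matvec n G (w t)) T \<and>
        w (Suc t) = (\<lambda>i. hard_thr T (matvec n G (w t)) i / vnorm n (hard_thr T (matvec n G (w t)))))"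

definition sin_angle :: "nat \<Rightarrow> (nat \<Rightarrow> real) \<Rightarrow> (nat \<Rightarrow> real) \<Rightarrow> real" where
  "sin_angle n a b = sqrt (1 - (vdot n a b)\<^sup>2)"

end

theory Submission
  imports Defs "HOL-Analysis.Analysis"
begin


lemma compact_box:
  fixes S :: "nat set"
  shows "compact (PiE UNIV (\<lambda>i. if i \<in> S then {-1..1::real} else {0}))"
proof -
  have "compactin (product_topology (\<lambda>i. euclidean) UNIV) (PiE UNIV (\<lambda>i. if i \<in> S then {-1..1::real} else {0}))"
    by (subst compactin_PiE) auto
  then show ?thesis by (simp add: euclidean_product_topology)
qed

lemma quad_zero:
  fixes B D :: real
  assumes "\<And>t. 2 * t * B + t\<^sup>2 * D \<le> 0"
  shows "B = 0"
proof (rule ccontr)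
  assume nz: "B \<noteq> 0"
  define t where "t = B / (\<bar>D\<bar> + 1)"
  have pos: "\<bar>D\<bar> + 1 > 0" by simp
  have e1: "2 * t * B + t\<^sup>2 * D \<ge> 2 * t * B - t\<^sup>2 * \<bar>D\<bar>"
    by (smt (verit) abs_ge_minus_self mult_left_mono zero_le_power2 mult_minus_right)
  have e2: "2 * t * B - t\<^sup>2 * \<bar>D\<bar> = B\<^sup>2 * (\<bar>D\<bar> + 2) / (\<bar>D\<bar> + 1)\<^sup>2"
  proof -
    have "\<And>d::real. d \<ge> 0 \<Longrightarrow> 2 * (B / (d+1)) * B - (B / (d+1))\<^sup>2 * d = B\<^sup>2 * (d + 2) / (d + 1)\<^sup>2"
    proof -
      fix d :: real assume "d \<ge> 0"
      then have h: "d + 1 \<noteq> 0" "1 + d \<noteq> 0" by auto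
      have g: "\<And>a::real. a \<noteq> 0 \<Longrightarrow> 2 * (B / a) * B - (B / a)\<^sup>2 * (a - 1) = B\<^sup>2 * (a + 1) / a\<^sup>2"
        by (simp add: field_simps power2_eq_square)
      show "2 * (B / (d+1)) * B - (B / (d+1))\<^sup>2 * d = B\<^sup>2 * (d + 2) / (d + 1)\<^sup>2"
        using g[OF h(1)] by (simp add: add.assoc)
    qed
    then show ?thesis unfolding t_def by simp
  qed
  have e3: "B\<^sup>2 * (\<bar>D\<bar> + 2) / (\<bar>D\<bar> + 1)\<^sup>2 > 0" using nz pos by (simp add: add_pos_nonneg)
  have "0 < 2 * t * B + t\<^sup>2 * D" using e1 e2 e3 by (metis order_less_le_trans)
  then show False using assms[of t] by simp
qed

definition qf :: "(nat \<Rightarrow> nat \<Rightarrow> real) \<Rightarrow> nat set \<Rightarrow> (nat \<Rightarrow> real) \<Rightarrow> (nat \<Rightarrow> real) \<Rightarrow> real" where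
  "qf A S x y = (\<Sum>i\<in>S. x i * (\<Sum>j\<in>S. A i j * y j))"

lemma qf_sym:
  assumes "\<forall>i\<in>S. \<forall>j\<in>S. A i j = A j i"
  shows "qf A S x y = qf A S y x"
proof -
  have "qf A S x y = (\<Sum>i\<in>S. \<Sum>j\<in>S. x i * A i j * y j)"
    unfolding qf_def by (simp add: sum_distrib_left mult.assoc)
  also have "\<dots> = (\<Sum>j\<in>S. \<Sum>i\<in>S. x i * A i j * y j)" by (rule sum.swap)
  also have "\<dots> = (\<Sum>j\<in>S. \<Sum>i\<in>S. y j * A j i * x i)"
    using assms by (intro sum.cong refl) (simp add: mult.commute mult.left_commute)
  also have "\<dots> = qf A S y x"
    unfolding qf_def by (simp add: sum_distrib_left mult.assoc)
  finally show ?thesis .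
qed

lemma qf_expand:
  "qf A S (\<lambda>i. x i + t * h i) (\<lambda>i. x i + t * h i)
     = qf A S x x + t * (qf A S x h + qf A S h x) + t\<^sup>2 * qf A S h h"
  unfolding qf_def
  by (simp add: algebra_simps sum.distrib sum_distrib_left power2_eq_square)

lemma qf_scale:
  "qf A S (\<lambda>i. c * x i) (\<lambda>i. c * x i) = c\<^sup>2 * qf A S x x"
  unfolding qf_def
  by (simp add: algebra_simps sum_distrib_left power2_eq_square)

lemma qf_cong:
  assumes "\<forall>i\<in>S. x i = x' i" "\<forall>i\<in>S. y i = y' i"
  shows "qf A S x y = qf A S x' y'"
  unfolding qf_def using assms by (intro sum.cong refl) auto

lemma cont_sq: "continuous_on UNIV (\<lambda>u::nat\<Rightarrow>real. \<Sum>i\<in>S. (u i)\<^sup>2)"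
  by (intro continuous_intros continuous_on_product_coordinates)

lemma cont_qf: "continuous_on K (\<lambda>u. qf A S u u)"
  unfolding qf_def
  by (intro continuous_intros continuous_on_subset[OF continuous_on_product_coordinates]) auto

lemma rayleigh_max:
  fixes A :: "nat \<Rightarrow> nat \<Rightarrow> real" and S :: "nat set"
  assumes fin: "finite S" and ne: "S \<noteq> {}" and sym: "\<forall>i\<in>S. \<forall>j\<in>S. A i j = A j i"
  shows "\<exists>\<mu> u. sub_eigenpair A S \<mu> u \<and> (\<forall>y. (\<Sum>i\<in>S. (y i)\<^sup>2) = 1 \<longrightarrow> qf A S y y \<le> \<mu>)"
proof -
  define B where "B = (\<lambda>i. if i \<in> S then {-1..1::real} else {0})"
  define K where "K = PiE UNIV B \<inter> {u. (\<Sum>i\<in>S. (u i)\<^sup>2) = 1}"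
  have cK: "compact K"
    unfolding K_def B_def
    by (intro compact_Int_closed compact_box closed_Collect_eq cont_sq continuous_on_const)
  obtain i0 where i0: "i0 \<in> S" using ne by auto
  define e0 where "e0 = (\<lambda>i. if i = i0 then 1 else (0::real))"
  have "(\<Sum>i\<in>S. (e0 i)\<^sup>2) = 1"
  proof -
    have "(\<Sum>i\<in>S. (e0 i)\<^sup>2) = (\<Sum>i\<in>S. if i = i0 then 1 else 0)"
      by (intro sum.cong) (auto simp: e0_def)
    then show ?thesis using fin i0 by simp
  qed
  moreover have "e0 \<in> PiE UNIV B" unfolding e0_def B_def using i0 by auto
  ultimately have "e0 \<in> K" unfolding K_def by auto
  then have Kne: "K \<noteq> {}" by auto
  obtain u where uK: "u \<in> K" and umax: "\<forall>y\<in>K. qf A S y y \<le> qf A S u u"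
    using continuous_attains_sup[OF cK Kne cont_qf] by blast
  define \<mu> where "\<mu> = qf A S u u"
  have u1: "(\<Sum>i\<in>S. (u i)\<^sup>2) = 1" using uK unfolding K_def by auto
  have u0: "\<forall>j. j \<notin> S \<longrightarrow> u j = 0" using uK unfolding K_def B_def by (auto simp: PiE_iff) (metis singletonD)
  have claim1: "qf A S y y \<le> \<mu>" if y1: "(\<Sum>i\<in>S. (y i)\<^sup>2) = 1" for y
  proof -
    define y' where "y' = (\<lambda>i. if i \<in> S then y i else 0)"
    have "\<bar>y i\<bar> \<le> 1" if "i \<in> S" for i
    proof -
      have "(y i)\<^sup>2 \<le> (\<Sum>i\<in>S. (y i)\<^sup>2)"
        by (rule member_le_sum) (use that fin in auto)
      then have "(y i)\<^sup>2 \<le> 1\<^sup>2" using y1 by simp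
      then show ?thesis using abs_le_square_iff[of "y i" 1] by simp
    qed
    then have "y' \<in> PiE UNIV B" unfolding y'_def B_def by (auto simp: abs_le_iff)
    moreover have "(\<Sum>i\<in>S. (y' i)\<^sup>2) = 1" unfolding y'_def using y1 by simp
    ultimately have "y' \<in> K" unfolding K_def by auto
    then have "qf A S y' y' \<le> \<mu>" using umax \<mu>_def by auto
    moreover have "qf A S y' y' = qf A S y y" by (rule qf_cong) (auto simp: y'_def)
    ultimately show ?thesis by simp
  qed
  have claim2: "qf A S z z \<le> \<mu> * (\<Sum>i\<in>S. (z i)\<^sup>2)" for z
  proof (cases "(\<Sum>i\<in>S. (z i)\<^sup>2) = 0")
    case True
    then have "\<forall>i\<in>S. z i = 0" using fin by (simp add: sum_nonneg_eq_0_iff)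
    then have "qf A S z z = qf A S (\<lambda>i. 0) (\<lambda>i. 0)" by (intro qf_cong) auto
    then show ?thesis using True by (simp add: qf_def)
  next
    case False
    define s where "s = (\<Sum>i\<in>S. (z i)\<^sup>2)"
    have spos: "s > 0" using False unfolding s_def by (simp add: order_neq_le_trans sum_nonneg)
    define c where "c = 1 / sqrt s"
    have c2: "c\<^sup>2 = 1 / s" unfolding c_def using spos by (simp add: power_divide)
    have "(\<Sum>i\<in>S. (c * z i)\<^sup>2) = c\<^sup>2 * s"
      unfolding s_def by (simp add: power_mult_distrib sum_distrib_left)
    also have "\<dots> = 1" using c2 spos by simp
    finally have "qf A S (\<lambda>i. c * z i) (\<lambda>i. c * z i) \<le> \<mu>" by (rule claim1)
    then have "qf A S z z / s \<le> \<mu>" using c2 by (simp add: qf_scale)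
    then show ?thesis using spos unfolding s_def[symmetric] by (simp add: divide_le_eq mult.commute)
  qed
  have claim3: "qf A S u h - \<mu> * (\<Sum>i\<in>S. u i * h i) = 0" for h
  proof (rule quad_zero)
    fix t :: real
    have "qf A S (\<lambda>i. u i + t * h i) (\<lambda>i. u i + t * h i) \<le> \<mu> * (\<Sum>i\<in>S. (u i + t * h i)\<^sup>2)"
      by (rule claim2)
    moreover have "qf A S (\<lambda>i. u i + t * h i) (\<lambda>i. u i + t * h i)
        = \<mu> + 2 * t * qf A S u h + t\<^sup>2 * qf A S h h"
      unfolding qf_expand \<mu>_def using qf_sym[OF sym, of h u] by simp
    moreover have "(\<Sum>i\<in>S. (u i + t * h i)\<^sup>2) = 1 + 2 * t * (\<Sum>i\<in>S. u i * h i) + t\<^sup>2 * (\<Sum>i\<in>S. (h i)\<^sup>2)"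
      using u1 by (simp add: power2_sum sum.distrib sum_distrib_left power_mult_distrib algebra_simps)
    ultimately show "2 * t * (qf A S u h - \<mu> * (\<Sum>i\<in>S. u i * h i))
        + t\<^sup>2 * (qf A S h h - \<mu> * (\<Sum>i\<in>S. (h i)\<^sup>2)) \<le> 0"
      by (simp add: algebra_simps)
  qed
  define h where "h = (\<lambda>i. (\<Sum>j\<in>S. A i j * u j) - \<mu> * u i)"
  have "qf A S u h = qf A S h u" by (rule qf_sym[OF sym])
  then have "(\<Sum>i\<in>S. h i * (\<Sum>j\<in>S. A i j * u j)) - \<mu> * (\<Sum>i\<in>S. u i * h i) = 0"
    using claim3[of h] unfolding qf_def by simp
  moreover have "(\<Sum>i\<in>S. (h i)\<^sup>2) = (\<Sum>i\<in>S. h i * (\<Sum>j\<in>S. A i j * u j) - \<mu> * (u i * h i))"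
  proof (intro sum.cong refl)
    fix i
    have "h i = (\<Sum>j\<in>S. A i j * u j) - \<mu> * u i" by (simp add: h_def)
    then show "(h i)\<^sup>2 = h i * (\<Sum>j\<in>S. A i j * u j) - \<mu> * (u i * h i)"
      by (metis (no_types, lifting) mult.commute power2_eq_square right_diff_distrib mult.left_commute)
  qed
  ultimately have "(\<Sum>i\<in>S. (h i)\<^sup>2) = 0"
    by (simp add: sum_subtractf sum_distrib_left)
  then have hz: "\<forall>i\<in>S. h i = 0" using fin by (simp add: sum_nonneg_eq_0_iff)
  have "\<exists>j\<in>S. u j \<noteq> 0"
  proof (rule ccontr)
    assume "\<not> ?thesis"
    then have "(\<Sum>i\<in>S. (u i)\<^sup>2) = 0" by simp
    then show False using u1 by simp
  qed
  then have "sub_eigenpair A S \<mu> u"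
    unfolding sub_eigenpair_def using u0 hz unfolding h_def by auto
  then show ?thesis using claim1 by blast
qed

lemma L2_restr:
  assumes "A \<subseteq> B" "finite B"
  shows "L2_set (\<lambda>i. if i \<in> A then f i else 0) B = L2_set f A"
proof -
  have "(\<Sum>i\<in>B. (if i \<in> A then f i else 0)\<^sup>2) = (\<Sum>i\<in>B. if i \<in> A then (f i)\<^sup>2 else 0)"
    by (intro sum.cong) auto
  also have "\<dots> = (\<Sum>i\<in>B \<inter> A. (f i)\<^sup>2)" by (rule sum.inter_restrict[symmetric]) (use assms in auto)
  also have "B \<inter> A = A" using assms by auto
  finally show ?thesis unfolding L2_set_def by simp
qed

lemma L2_sub_mono:
  assumes "A \<subseteq> B" "finite B"
  shows "L2_set f A \<le> L2_set f B"
  unfolding L2_set_def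
  by (intro real_sqrt_le_mono sum_mono2) (use assms in auto)

lemma L2_zero_outside:
  assumes "A \<subseteq> B" "finite B" "\<forall>i\<in>B - A. f i = 0"
  shows "L2_set f B = L2_set f A"
  unfolding L2_set_def
  by (rule arg_cong[where f=sqrt], rule sum.mono_neutral_right) (use assms in auto)

lemma L2_neg: "L2_set (\<lambda>i. - f i) A = L2_set f A"
  unfolding L2_set_def by simp

lemma L2_sq: "(L2_set f A)\<^sup>2 = (\<Sum>i\<in>A. (f i)\<^sup>2)"
  unfolding L2_set_def by (simp add: sum_nonneg)

lemma L2_scale: "L2_set (\<lambda>i. c * f i) A = \<bar>c\<bar> * L2_set f A"
proof -
  have "L2_set (\<lambda>i. c * f i) A = L2_set (\<lambda>i. \<bar>c\<bar> * f i) A"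
    unfolding L2_set_def by (simp add: power_mult_distrib)
  also have "\<dots> = \<bar>c\<bar> * L2_set f A" by (rule L2_set_right_distrib[symmetric]) simp
  finally show ?thesis .
qed

lemma qf_abs_le:
  "\<bar>qf A S x x\<bar> \<le> L2_set x S * L2_set (\<lambda>i. \<Sum>j\<in>S. A i j * x j) S"
proof -
  have "\<bar>qf A S x x\<bar> \<le> (\<Sum>i\<in>S. \<bar>x i\<bar> * \<bar>\<Sum>j\<in>S. A i j * x j\<bar>)"
    unfolding qf_def by (rule order_trans[OF sum_abs]) (simp add: abs_mult)
  also have "\<dots> \<le> L2_set x S * L2_set (\<lambda>i. \<Sum>j\<in>S. A i j * x j) S"
    by (rule L2_set_mult_ineq)
  finally show ?thesis .
qed

lemma spec_bdd:
  fixes A :: "nat \<Rightarrow> nat \<Rightarrow> real" and U :: "nat set"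
  assumes "finite U"
  shows "bdd_above {sqrt (\<Sum>i\<in>U. (\<Sum>j\<in>U. A i j * u j)\<^sup>2) | u. (\<Sum>j\<in>U. (u j)\<^sup>2) = 1}"
proof (rule bdd_aboveI, clarify)
  fix u :: "nat \<Rightarrow> real" assume u1: "(\<Sum>j\<in>U. (u j)\<^sup>2) = 1"
  have ub: "\<bar>u j\<bar> \<le> 1" if "j \<in> U" for j
  proof -
    have "(u j)\<^sup>2 \<le> (\<Sum>j\<in>U. (u j)\<^sup>2)" by (rule member_le_sum) (use that assms in auto)
    then have "(u j)\<^sup>2 \<le> 1\<^sup>2" using u1 by simp
    then show ?thesis using abs_le_square_iff[of "u j" 1] by simp
  qed
  have "sqrt (\<Sum>i\<in>U. (\<Sum>j\<in>U. A i j * u j)\<^sup>2) = L2_set (\<lambda>i. \<Sum>j\<in>U. A i j * u j) U"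
    by (simp add: L2_set_def)
  also have "\<dots> \<le> (\<Sum>i\<in>U. \<bar>\<Sum>j\<in>U. A i j * u j\<bar>)" by (rule L2_set_le_sum_abs)
  also have "\<dots> \<le> (\<Sum>i\<in>U. \<Sum>j\<in>U. \<bar>A i j\<bar>)"
  proof (intro sum_mono)
    fix i assume "i \<in> U"
    have "\<bar>\<Sum>j\<in>U. A i j * u j\<bar> \<le> (\<Sum>j\<in>U. \<bar>A i j * u j\<bar>)" by (rule sum_abs)
    also have "\<dots> \<le> (\<Sum>j\<in>U. \<bar>A i j\<bar>)"
    proof (intro sum_mono)
      fix j assume "j \<in> U"
      then show "\<bar>A i j * u j\<bar> \<le> \<bar>A i j\<bar>" using ub[of j]
        by (simp add: abs_mult mult_left_le)
    qed
    finally show "\<bar>\<Sum>j\<in>U. A i j * u j\<bar> \<le> (\<Sum>j\<in>U. \<bar>A i j\<bar>)" .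
  qed
  finally show "sqrt (\<Sum>i\<in>U. (\<Sum>j\<in>U. A i j * u j)\<^sup>2) \<le> (\<Sum>i\<in>U. \<Sum>j\<in>U. \<bar>A i j\<bar>)" .
qed

lemma spec_bound:
  assumes fin: "finite U" and c: "sub_spec_norm A U \<le> c"
  shows "L2_set (\<lambda>i. \<Sum>j\<in>U. A i j * x j) U \<le> c * L2_set x U"
proof (cases "L2_set x U = 0")
  case True
  then have "\<forall>j\<in>U. x j = 0" using fin by (simp add: L2_set_eq_0_iff)
  then have "L2_set (\<lambda>i. \<Sum>j\<in>U. A i j * x j) U = 0" by (simp add: L2_set_def)
  then show ?thesis using True by simp
next
  case False
  define s where "s = L2_set x U"
  have spos: "s > 0" using False unfolding s_def by (simp add: order_neq_le_trans)
  define u where "u = (\<lambda>j. x j / s)"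
  have "(\<Sum>j\<in>U. (u j)\<^sup>2) = (\<Sum>j\<in>U. (x j)\<^sup>2) / s\<^sup>2"
    unfolding u_def by (simp add: power_divide sum_divide_distrib)
  also have "\<dots> = 1"
  proof -
    have "s\<^sup>2 = (\<Sum>j\<in>U. (x j)\<^sup>2)" unfolding s_def by (rule L2_sq)
    then show ?thesis using spos by (metis divide_self less_numeral_extra(3) zero_less_power)
  qed
  finally have u1: "(\<Sum>j\<in>U. (u j)\<^sup>2) = 1" .
  have "L2_set (\<lambda>i. \<Sum>j\<in>U. A i j * u j) U \<le> sub_spec_norm A U"
    unfolding sub_spec_norm_def
    by (rule cSup_upper[OF _ spec_bdd[OF fin]]) (use u1 in \<open>auto simp: L2_set_def\<close>)
  moreover have "L2_set (\<lambda>i. \<Sum>j\<in>U. A i j * u j) U = (1/s) * L2_set (\<lambda>i. \<Sum>j\<in>U. A i j * x j) U"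
  proof -
    have "L2_set (\<lambda>i. \<Sum>j\<in>U. A i j * u j) U = L2_set (\<lambda>i. (1/s) * (\<Sum>j\<in>U. A i j * x j)) U"
      unfolding u_def by (simp add: sum_distrib_left sum_divide_distrib)
    moreover have "L2_set (\<lambda>i. (1/s) * (\<Sum>j\<in>U. A i j * x j)) U = \<bar>1/s\<bar> * L2_set (\<lambda>i. \<Sum>j\<in>U. A i j * x j) U"
      by (rule L2_scale)
    ultimately show ?thesis using spos by simp
  qed
  ultimately have "(1/s) * L2_set (\<lambda>i. \<Sum>j\<in>U. A i j * x j) U \<le> c" using c by simp
  then show ?thesis using spos unfolding s_def[symmetric] by (simp add: field_simps mult.commute)
qed

lemma vnorm_L2: "vnorm n u = L2_set u {..<n}"
  by (simp add: vnorm_def L2_set_def)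

lemma top_comb:
  fixes y :: "nat \<Rightarrow> real"
  assumes top: "top_set n k' y T" and V: "V \<subseteq> {..<n}" and Vc: "card V \<le> k'"
  shows "(\<Sum>i\<in>V - T. (y i)\<^sup>2) \<le> (\<Sum>i\<in>T - V. (y i)\<^sup>2)"
proof (cases "V - T = {}")
  case True
  then have "(\<Sum>i\<in>V - T. (y i)\<^sup>2) = 0" by (metis sum.empty)
  then show ?thesis by (simp add: sum_nonneg)
next
  case False
  have Tn: "T \<subseteq> {..<n}" and cT: "card T = min k' n"
    and dom: "\<forall>i\<in>T. \<forall>j\<in>{..<n} - T. \<bar>y j\<bar> \<le> \<bar>y i\<bar>"
    using top unfolding top_set_def by auto
  have fT: "finite T" using Tn finite_subset by blast
  have fV: "finite V" using V finite_subset by blast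
  have "card V \<le> n" using card_mono[OF _ V] by simp
  then have cVT: "card V \<le> card T" using Vc cT by simp
  have c1: "card (V - T) = card V - card (V \<inter> T)" using fV by (intro card_Diff_subset_Int) simp
  have c2: "card (T - V) = card T - card (T \<inter> V)" using fT by (intro card_Diff_subset_Int) simp
  have "V \<inter> T = T \<inter> V" by auto
  then have cc: "card (V - T) \<le> card (T - V)" using c1 c2 cVT by simp
  define M where "M = Max ((\<lambda>i. (y i)\<^sup>2) ` (V - T))"
  have fin1: "finite ((\<lambda>i. (y i)\<^sup>2) ` (V - T))" using fV by simp
  have ne1: "(\<lambda>i. (y i)\<^sup>2) ` (V - T) \<noteq> {}" using False by simp
  have "(\<Sum>i\<in>V - T. (y i)\<^sup>2) \<le> of_nat (card (V - T)) * M"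
    by (rule sum_bounded_above) (use fin1 in \<open>auto simp: M_def\<close>)
  also have "\<dots> \<le> of_nat (card (T - V)) * M"
  proof -
    have "M \<ge> 0" using Max_in[OF fin1 ne1] unfolding M_def by auto
    then show ?thesis using cc by (simp add: mult_right_mono)
  qed
  also have "\<dots> \<le> (\<Sum>i\<in>T - V. (y i)\<^sup>2)"
  proof (rule sum_bounded_below)
    fix j assume j: "j \<in> T - V"
    obtain i where i: "i \<in> V - T" and Mi: "M = (y i)\<^sup>2"
      using Max_in[OF fin1 ne1] unfolding M_def by auto
    have "i \<in> {..<n} - T" using i V by auto
    then have "\<bar>y i\<bar> \<le> \<bar>y j\<bar>" using dom j by auto
    then show "M \<le> (y j)\<^sup>2" unfolding Mi using abs_le_square_iff by blast
  qed
  finally show ?thesis .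
qed



lemma tp_step:
  fixes n k' :: nat and \<theta> \<epsilon> :: real and v w :: "nat \<Rightarrow> real" and G W :: "nat \<Rightarrow> nat \<Rightarrow> real"
    and T :: "nat set"
  assumes th: "\<theta> > 0" and ep: "\<epsilon> > 0"
    and vn: "L2_set v {..<n} = 1"
    and Vc: "card {i. i < n \<and> v i \<noteq> 0} \<le> k'"
    and wn: "L2_set w {..<n} = 1"
    and Fc: "card {j. j < n \<and> w j \<noteq> 0} \<le> k'"
    and G: "\<forall>i j. G i j = \<theta> * v i * v j + W i j"
    and top: "top_set n k' (matvec n G w) T"
    and Eb: "\<forall>U x. U \<subseteq> {..<n} \<longrightarrow> U \<noteq> {} \<longrightarrow> card U \<le> 3 * k' \<longrightarrow>
               L2_set (\<lambda>i. \<Sum>j\<in>U. W i j * x j) U \<le> \<epsilon> * L2_set x U"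
    and a: "4 * \<epsilon> \<le> \<theta> * \<bar>vdot n w v\<bar>"
  shows "sin_angle n (\<lambda>i. hard_thr T (matvec n G w) i / vnorm n (hard_thr T (matvec n G w))) v
            \<le> 4 * \<epsilon> / (\<theta> * \<bar>vdot n w v\<bar>)
         \<and> vnorm n (\<lambda>i. hard_thr T (matvec n G w) i / vnorm n (hard_thr T (matvec n G w))) = 1"
proof -
  define a where "a = vdot n w v"
  define y where "y = matvec n G w"
  define V where "V = {i. i < n \<and> v i \<noteq> 0}"
  define F where "F = {j. j < n \<and> w j \<noteq> 0}"
  define U where "U = T \<union> V \<union> F"
  have Tn: "T \<subseteq> {..<n}" and cT: "card T = min k' n"
    using top unfolding top_set_def by auto
  have Vn: "V \<subseteq> {..<n}" and Fn: "F \<subseteq> {..<n}" unfolding V_def F_def by auto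
  have Un: "U \<subseteq> {..<n}" unfolding U_def using Tn Vn Fn by auto
  have fU: "finite U" using Un finite_subset by blast
  have fT: "finite T" using Tn finite_subset by blast
  have fV: "finite V" using Vn finite_subset by blast
  have fF: "finite F" using Fn finite_subset by blast
  have Fne: "F \<noteq> {}"
  proof
    assume "F = {}"
    then have "\<forall>j\<in>{..<n}. w j = 0" unfolding F_def by auto
    then have "L2_set w {..<n} = 0" by (simp add: L2_set_0')
    then show False using wn by simp
  qed
  have Une: "U \<noteq> {}" using Fne unfolding U_def by auto
  have "card U \<le> card T + card V + card F"
    unfolding U_def using card_Un_le[of "T \<union> V" F] card_Un_le[of T V] by linarith
  also have "\<dots> \<le> 3 * k'" using cT Vc Fc unfolding V_def[symmetric] F_def[symmetric] by simp
  finally have cU: "card U \<le> 3 * k'" .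
  define z where "z = (\<lambda>i. \<Sum>j\<in>U. W i j * w j)"
  have w0: "\<forall>j\<in>{..<n} - U. w j = 0" unfolding U_def F_def by auto
  have wU: "L2_set w U = 1"
    using wn L2_zero_outside[OF Un _ w0] by simp
  have zb: "L2_set z U \<le> \<epsilon>"
  proof -
    have "L2_set z U \<le> \<epsilon> * L2_set w U" using Eb Un Une cU unfolding z_def by blast
    then show ?thesis using wU by simp
  qed
  have ydec: "y i = \<theta> * v i * a + z i" for i
  proof -
    have "y i = (\<Sum>j<n. \<theta> * v i * (w j * v j) + W i j * w j)"
      unfolding y_def matvec_def using G by (simp add: algebra_simps)
    also have "\<dots> = \<theta> * v i * a + (\<Sum>j<n. W i j * w j)"
      unfolding a_def vdot_def by (simp add: sum.distrib sum_distrib_left)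
    also have "(\<Sum>j<n. W i j * w j) = z i"
      unfolding z_def by (rule sum.mono_neutral_right) (use Un w0 in auto)
    finally show ?thesis .
  qed
  have comb: "(\<Sum>i\<in>V - T. (y i)\<^sup>2) \<le> (\<Sum>i\<in>T - V. (y i)\<^sup>2)"
    using top_comb[OF top[folded y_def] Vn] Vc unfolding V_def by simp
  have vz: "\<forall>i<n. i \<notin> V \<longrightarrow> v i = 0" unfolding V_def by auto
  have yz: "\<forall>i\<in>T - V. y i = z i" using ydec vz Tn by auto
  define h where "h = hard_thr T y"
  define e where "e = (\<lambda>i. h i - \<theta> * a * v i)"
  have e_eq: "e i = (if i \<in> T \<union> V then z i else 0) + - (if i \<in> V - T then y i else 0)"
    if "i < n" for i
    using ydec[of i] vz that unfolding e_def h_def hard_thr_def by (auto simp: algebra_simps)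
  have t1: "L2_set e {..<n} = L2_set (\<lambda>i. (if i \<in> T \<union> V then z i else 0) + - (if i \<in> V - T then y i else 0)) {..<n}"
    using e_eq by (intro L2_set_cong) auto
  have t2: "L2_set (\<lambda>i. (if i \<in> T \<union> V then z i else 0) + - (if i \<in> V - T then y i else 0)) {..<n}
      \<le> L2_set (\<lambda>i. if i \<in> T \<union> V then z i else 0) {..<n}
       + L2_set (\<lambda>i. - (if i \<in> V - T then y i else 0)) {..<n}"
    by (rule L2_set_triangle_ineq)
  have t3: "L2_set (\<lambda>i. if i \<in> T \<union> V then z i else 0) {..<n} = L2_set z (T \<union> V)"
    by (rule L2_restr) (use Tn Vn in auto)
  have t4: "L2_set (\<lambda>i. - (if i \<in> V - T then y i else 0)) {..<n} = L2_set y (V - T)"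
    unfolding L2_neg by (rule L2_restr) (use Vn in auto)
  have t5: "L2_set z (T \<union> V) \<le> L2_set z U"
    by (rule L2_sub_mono) (use fU in \<open>auto simp: U_def\<close>)
  have t6: "L2_set y (V - T) \<le> L2_set y (T - V)"
    unfolding L2_set_def using comb by simp
  have t7: "L2_set y (T - V) = L2_set z (T - V)"
    using yz by (intro L2_set_cong) auto
  have t8: "L2_set z (T - V) \<le> L2_set z U"
    by (rule L2_sub_mono) (use fU in \<open>auto simp: U_def\<close>)
  have eb: "L2_set e {..<n} \<le> 2 * \<epsilon>" using t1 t2 t3 t4 t5 t6 t7 t8 zb by linarith
  define N where "N = L2_set h {..<n}"
  have "\<theta> * \<bar>a\<bar> = L2_set (\<lambda>i. (\<theta> * a) * v i) {..<n}"
    using vn th by (simp add: L2_scale abs_mult)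
  also have "\<dots> = L2_set (\<lambda>i. h i + - e i) {..<n}" unfolding e_def by simp
  also have "\<dots> \<le> N + L2_set (\<lambda>i. - e i) {..<n}"
    unfolding N_def by (rule L2_set_triangle_ineq)
  also have "\<dots> \<le> N + 2 * \<epsilon>" using eb by (simp add: L2_neg)
  finally have Nlb: "\<theta> * \<bar>a\<bar> - 2 * \<epsilon> \<le> N" by simp
  have a4: "4 * \<epsilon> \<le> \<theta> * \<bar>a\<bar>" using a unfolding a_def .
  have Npos: "N > 0" using Nlb a4 ep by linarith
  have N2: "\<theta> * \<bar>a\<bar> / 2 \<le> N" using Nlb a4 by linarith
  define c where "c = (\<Sum>i<n. h i * v i)"
  have v2: "(\<Sum>i<n. (v i)\<^sup>2) = 1" using vn L2_sq[of v "{..<n}"] by simp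
  have e2a: "(\<Sum>i<n. (e i)\<^sup>2) = (\<Sum>i<n. (h i)\<^sup>2) - 2 * (\<theta> * a) * c + (\<theta> * a)\<^sup>2 * (\<Sum>i<n. (v i)\<^sup>2)"
    unfolding e_def c_def
    by (simp add: power2_diff sum.distrib sum_subtractf sum_distrib_left power_mult_distrib algebra_simps)
  have hN2: "(\<Sum>i<n. (h i)\<^sup>2) = N\<^sup>2" unfolding N_def by (simp add: L2_sq)
  have e2: "(\<Sum>i<n. (e i)\<^sup>2) = N\<^sup>2 - 2 * (\<theta> * a) * c + (\<theta> * a)\<^sup>2" using e2a hN2 v2 by simp
  have "N\<^sup>2 - c\<^sup>2 \<le> (\<Sum>i<n. (e i)\<^sup>2)"
    unfolding e2 using zero_le_power2[of "\<theta> * a - c"] by (simp add: power2_diff)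
  also have "\<dots> = (L2_set e {..<n})\<^sup>2" by (simp add: L2_sq)
  also have "\<dots> \<le> (2 * \<epsilon>)\<^sup>2"
    using eb by (intro power_mono) auto
  finally have Nc: "N\<^sup>2 - c\<^sup>2 \<le> (2 * \<epsilon>)\<^sup>2" .
  define w' where "w' = (\<lambda>i. h i / N)"
  have vn': "vnorm n w' = 1"
  proof -
    have "vnorm n w' = L2_set (\<lambda>i. (1/N) * h i) {..<n}" unfolding vnorm_L2 w'_def by simp
    also have "\<dots> = \<bar>1/N\<bar> * N" unfolding N_def by (rule L2_scale)
    finally show ?thesis using Npos by simp
  qed
  have dot: "vdot n w' v = c / N"
    unfolding vdot_def w'_def c_def by (simp add: sum_divide_distrib)
  have "1 - (c / N)\<^sup>2 = (N\<^sup>2 - c\<^sup>2) / N\<^sup>2" using Npos by (simp add: field_simps power_divide)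
  also have "\<dots> \<le> (2 * \<epsilon>)\<^sup>2 / N\<^sup>2" using Nc Npos by (simp add: divide_right_mono)
  also have "\<dots> = (2 * \<epsilon> / N)\<^sup>2" by (simp add: power_divide)
  finally have "sin_angle n w' v \<le> sqrt ((2 * \<epsilon> / N)\<^sup>2)"
    unfolding sin_angle_def dot by (rule real_sqrt_le_mono)
  also have "\<dots> = 2 * \<epsilon> / N" using Npos ep by simp
  also have "\<dots> \<le> 2 * \<epsilon> / (\<theta> * \<bar>a\<bar> / 2)"
    using N2 ep a4 by (intro divide_left_mono) auto
  also have "\<dots> = 4 * \<epsilon> / (\<theta> * \<bar>a\<bar>)" by simp
  finally have sa: "sin_angle n w' v \<le> 4 * \<epsilon> / (\<theta> * \<bar>a\<bar>)" .
  have hN: "vnorm n (hard_thr T (matvec n G w)) = N"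
    unfolding vnorm_L2 N_def h_def y_def ..
  show ?thesis
    using sa vn' unfolding w'_def hN[symmetric] h_def y_def a_def by simp
qed

lemma qf_G:
  assumes G: "\<forall>i j. G i j = \<theta> * v i * v j + W i j"
  shows "qf G S x x = \<theta> * (\<Sum>i\<in>S. v i * x i)\<^sup>2 + qf W S x x"
proof -
  have "qf G S x x = (\<Sum>i\<in>S. \<theta> * (v i * x i) * (\<Sum>j\<in>S. v j * x j) + x i * (\<Sum>j\<in>S. W i j * x j))"
    unfolding qf_def using G
    by (intro sum.cong refl) (simp add: sum.distrib sum_distrib_left algebra_simps)
  also have "\<dots> = \<theta> * (\<Sum>i\<in>S. v i * x i) * (\<Sum>j\<in>S. v j * x j) + qf W S x x"
    unfolding qf_def by (simp add: sum.distrib sum_distrib_left sum_distrib_right algebra_simps)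
  finally show ?thesis by (simp add: power2_eq_square)
qed

theorem theorem2:
  fixes C0 :: real
  assumes "C0 > 0"
  shows "\<exists>C1>0. \<exists>C2>0. \<forall>(n::nat) (m::nat) (\<theta>::real) (k::nat) (v::nat \<Rightarrow> real)
           (x::nat \<Rightarrow> nat \<Rightarrow> real) (\<gamma>::real) (k'::nat)
           (S::nat \<Rightarrow> nat set) (e::nat \<Rightarrow> nat \<Rightarrow> real) (w::nat \<Rightarrow> nat \<Rightarrow> real).
     n \<ge> 2 \<and> m \<ge> 1 \<and> \<theta> > 0 \<and> 1 \<le> k \<and> k \<le> n \<and>
     vnorm n v = 1 \<and> card {i. i < n \<and> v i \<noteq> 0} \<le> k \<and>
     event_E C0 n m \<theta> (W_mat m x \<theta> v) \<and>
     0 < \<gamma> \<and> \<gamma> < 1 \<and> k \<le> k' \<and>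
     SEP_run n k (Gamma_hat m x) S e (w 0) \<and>
     restr_norm (S k) v \<ge> sqrt \<gamma> \<and>
     TPower_run n k' (Gamma_hat m x) w \<and>
     real m \<ge> C1 * (1 + \<theta>)\<^sup>2 / (\<theta>\<^sup>2 * \<gamma>\<^sup>2) * real k' * ln (real n)
     \<longrightarrow> (\<forall>T\<ge>1. sin_angle n (w T) v
            \<le> C2 * (1 + \<theta>) / (\<theta> * \<gamma>) * sqrt (real k' * ln (real n) / real m))"

proof -
  define C1 where "C1 = 1024 * C0\<^sup>2"
  define C2 where "C2 = 16 * C0"
  have C1pos: "C1 > 0" unfolding C1_def using assms by simp
  have C2pos: "C2 > 0" unfolding C2_def using assms by simp
  have main: "sin_angle n (w T) v \<le> C2 * (1 + \<theta>) / (\<theta> * \<gamma>) * sqrt (real k' * ln (real n) / real m)"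
    if H: "n \<ge> 2 \<and> m \<ge> 1 \<and> \<theta> > 0 \<and> 1 \<le> k \<and> k \<le> n \<and>
     vnorm n v = 1 \<and> card {i. i < n \<and> v i \<noteq> 0} \<le> k \<and>
     event_E C0 n m \<theta> (W_mat m x \<theta> v) \<and>
     0 < \<gamma> \<and> \<gamma> < 1 \<and> k \<le> k' \<and>
     SEP_run n k (Gamma_hat m x) S e (w 0) \<and>
     restr_norm (S k) v \<ge> sqrt \<gamma> \<and>
     TPower_run n k' (Gamma_hat m x) w \<and>
     real m \<ge> C1 * (1 + \<theta>)\<^sup>2 / (\<theta>\<^sup>2 * \<gamma>\<^sup>2) * real k' * ln (real n)"
    and T1: "T \<ge> 1"
    for n m :: nat and \<theta> :: real and k :: nat and v :: "nat \<Rightarrow> real"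
      and x :: "nat \<Rightarrow> nat \<Rightarrow> real" and \<gamma> :: real and k' :: nat
      and S :: "nat \<Rightarrow> nat set" and e :: "nat \<Rightarrow> nat \<Rightarrow> real" and w :: "nat \<Rightarrow> nat \<Rightarrow> real"
      and T :: nat
  proof -
    have n2: "n \<ge> 2" and m1: "m \<ge> 1" and th: "\<theta> > 0" and k1: "1 \<le> k" and kn: "k \<le> n"
      and vn: "vnorm n v = 1" and Vc: "card {i. i < n \<and> v i \<noteq> 0} \<le> k"
      and EE: "event_E C0 n m \<theta> (W_mat m x \<theta> v)"
      and g0: "0 < \<gamma>" and g1: "\<gamma> < 1" and kk: "k \<le> k'"
      and SEP: "SEP_run n k (Gamma_hat m x) S e (w 0)"
      and rn: "restr_norm (S k) v \<ge> sqrt \<gamma>"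
      and TP: "TPower_run n k' (Gamma_hat m x) w"
      and mb: "real m \<ge> C1 * (1 + \<theta>)\<^sup>2 / (\<theta>\<^sup>2 * \<gamma>\<^sup>2) * real k' * ln (real n)"
      using H by (simp_all only:)
    define G where "G = Gamma_hat m x"
    define W where "W = W_mat m x \<theta> v"
    have GW: "\<forall>i j. G i j = \<theta> * v i * v j + W i j" unfolding G_def W_def W_mat_def by simp
    have Gsym: "\<forall>i j. G i j = G j i" unfolding G_def Gamma_hat_def by (simp add: mult.commute)
    have lnpos: "ln (real n) > 0" using n2 by simp
    have mpos: "real m > 0" using m1 by simp
    have k'pos: "real k' \<ge> 1" using k1 kk by simp
    define \<delta> where "\<delta> = sqrt (real k' * ln (real n) / real m)"
    have dpos: "\<delta> > 0" unfolding \<delta>_def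
      by (intro real_sqrt_gt_zero divide_pos_pos mult_pos_pos) (use lnpos mpos k'pos in auto)
    define \<epsilon> where "\<epsilon> = 2 * C0 * (1 + \<theta>) * \<delta>"
    have epos: "\<epsilon> > 0" unfolding \<epsilon>_def using assms th dpos by simp
    have epsb: "16 * \<epsilon> \<le> \<theta> * \<gamma>"
    proof -
      define X where "X = C1 * (1 + \<theta>)\<^sup>2 * real k' * ln (real n)"
      have tg: "\<theta>\<^sup>2 * \<gamma>\<^sup>2 > 0" using th g0 by simp
      have "C1 * (1 + \<theta>)\<^sup>2 / (\<theta>\<^sup>2 * \<gamma>\<^sup>2) * real k' * ln (real n) = X / (\<theta>\<^sup>2 * \<gamma>\<^sup>2)"
        unfolding X_def by (simp add: times_divide_eq_left mult.commute mult.left_commute)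
      then have "X / (\<theta>\<^sup>2 * \<gamma>\<^sup>2) \<le> real m" using mb by linarith
      then have Xm: "X \<le> real m * (\<theta>\<^sup>2 * \<gamma>\<^sup>2)" using tg by (simp add: divide_le_eq)
      have d2: "\<delta>\<^sup>2 = real k' * ln (real n) / real m"
        unfolding \<delta>_def using lnpos mpos k'pos by simp
      have "(16 * \<epsilon>)\<^sup>2 = 1024 * C0\<^sup>2 * (1 + \<theta>)\<^sup>2 * \<delta>\<^sup>2"
        unfolding \<epsilon>_def power2_eq_square by algebra
      also have "\<dots> = X / real m"
        unfolding d2 X_def C1_def by (simp only: times_divide_eq_right mult.assoc)
      also have "\<dots> \<le> (\<theta> * \<gamma>)\<^sup>2"
      proof -
        have eqq: "(\<theta> * \<gamma>)\<^sup>2 * real m = real m * (\<theta>\<^sup>2 * \<gamma>\<^sup>2)"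
          by (simp only: power_mult_distrib mult.commute)
        have "X \<le> (\<theta> * \<gamma>)\<^sup>2 * real m" unfolding eqq by (rule Xm)
        then show ?thesis by (simp only: pos_divide_le_eq[OF mpos])
      qed
      finally have "(16 * \<epsilon>)\<^sup>2 \<le> (\<theta> * \<gamma>)\<^sup>2" .
      moreover have "0 \<le> \<theta> * \<gamma>" using th g0 by simp
      ultimately show ?thesis by (rule power2_le_imp_le)
    qed
    have Eb: "\<forall>U xx. U \<subseteq> {..<n} \<longrightarrow> U \<noteq> {} \<longrightarrow> card U \<le> 3 * k' \<longrightarrow>
               L2_set (\<lambda>i. \<Sum>j\<in>U. W i j * xx j) U \<le> \<epsilon> * L2_set xx U"
    proof (intro allI impI)
      fix U :: "nat set" and xx :: "nat \<Rightarrow> real"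
      assume Un: "U \<subseteq> {..<n}" and Une: "U \<noteq> {}" and cU: "card U \<le> 3 * k'"
      have fU: "finite U" using Un finite_subset by blast
      have p1: "card U \<ge> 1" using fU Une by (simp add: Suc_leI card_gt_0_iff)
      have pn: "card U \<le> n" using card_mono[OF _ Un] by simp
      have s1: "sub_spec_norm W U \<le> C0 * (1 + \<theta>) * sqrt (real (card U) * ln (real n) / real m)"
        using EE p1 pn Un unfolding W_def event_E_def by auto
      have s2: "sqrt (real (card U) * ln (real n) / real m) \<le> sqrt (4 * (real k' * ln (real n) / real m))"
        using cU lnpos mpos by (intro real_sqrt_le_mono) (simp add: divide_right_mono)
      have s3: "sqrt (4 * (real k' * ln (real n) / real m)) = 2 * \<delta>" unfolding \<delta>_def real_sqrt_mult by simp
      have c0p: "C0 * (1 + \<theta>) \<ge> 0" using assms th by simp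
      have "sub_spec_norm W U \<le> C0 * (1 + \<theta>) * (2 * \<delta>)"
        using s1 mult_left_mono[OF s2 c0p] arg_cong[OF s3, of "\<lambda>t. C0 * (1 + \<theta>) * t"] by linarith
      then have "sub_spec_norm W U \<le> \<epsilon>" unfolding \<epsilon>_def by simp
      then show "L2_set (\<lambda>i. \<Sum>j\<in>U. W i j * xx j) U \<le> \<epsilon> * L2_set xx U"
        by (rule spec_bound[OF fU])
    qed

    define S0 where "S0 = S k"
    have S0n: "S0 \<subseteq> {..<n}" and cS0: "card S0 \<le> k"
    proof -
      have "S0 \<subseteq> {..<n} \<and> card S0 \<le> k"
      proof (cases "k = 1")
        case True
        then obtain js where "js < n" "S 1 = {js}" using SEP unfolding SEP_run_def by blast
        then show ?thesis unfolding S0_def using True by simp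
      next
        case False
        then have "k - 1 \<in> {1..k-1}" using k1 by simp
        then have "top_set n (k - 1 + 1) (\<lambda>i. matvec n (Gamma_hat m x) (e (k - 1)) i) (S (k - 1 + 1))"
          using SEP unfolding SEP_run_def by blast
        moreover have "k - 1 + 1 = k" using k1 by simp
        ultimately have "top_set n k (\<lambda>i. matvec n (Gamma_hat m x) (e (k - 1)) i) (S k)" by simp
        then show ?thesis unfolding S0_def top_set_def by auto
      qed
      then show "S0 \<subseteq> {..<n}" "card S0 \<le> k" by auto
    qed
    have fS0: "finite S0" using S0n finite_subset by blast
    have tse: "top_sub_eigvec G S0 (w 0)" using SEP unfolding SEP_run_def G_def S0_def by blast
    then have w01: "(\<Sum>j\<in>S0. (w 0 j)\<^sup>2) = 1"
      and "\<exists>lam. sub_eigenpair G S0 lam (w 0) \<and> (\<forall>lam' u'. sub_eigenpair G S0 lam' u' \<longrightarrow> lam' \<le> lam)"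
      unfolding top_sub_eigvec_def by auto
    then obtain lam where ep0: "sub_eigenpair G S0 lam (w 0)"
      and lmax: "\<forall>lam' u'. sub_eigenpair G S0 lam' u' \<longrightarrow> lam' \<le> lam" by blast
    have w0out: "\<forall>j. j \<notin> S0 \<longrightarrow> w 0 j = 0" and S0ne: "S0 \<noteq> {}"
      and eig: "\<forall>i\<in>S0. (\<Sum>j\<in>S0. G i j * w 0 j) = lam * w 0 i"
      using ep0 unfolding sub_eigenpair_def by auto
    have cS0': "card S0 \<le> 3 * k'" using cS0 kk by simp
    have EbS0: "L2_set (\<lambda>i. \<Sum>j\<in>S0. W i j * xx j) S0 \<le> \<epsilon> * L2_set xx S0" for xx
      using Eb S0n S0ne cS0' by blast
    have qWb: "\<bar>qf W S0 xx xx\<bar> \<le> \<epsilon>" if "(\<Sum>j\<in>S0. (xx j)\<^sup>2) = 1" for xx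
    proof -
      have L1: "L2_set xx S0 = 1" using that unfolding L2_set_def by simp
      have "\<bar>qf W S0 xx xx\<bar> \<le> L2_set xx S0 * L2_set (\<lambda>i. \<Sum>j\<in>S0. W i j * xx j) S0"
        by (rule qf_abs_le)
      also have "\<dots> \<le> \<epsilon>" using EbS0[of xx] L1 by simp
      finally show ?thesis .
    qed
    obtain \<mu> u where epu: "sub_eigenpair G S0 \<mu> u"
      and ray: "\<forall>y. (\<Sum>i\<in>S0. (y i)\<^sup>2) = 1 \<longrightarrow> qf G S0 y y \<le> \<mu>"
      using rayleigh_max[OF fS0 S0ne] Gsym by blast
    have mula: "\<mu> \<le> lam" using lmax epu by blast
    define r where "r = L2_set v S0"
    have rg: "r \<ge> sqrt \<gamma>" using rn unfolding r_def S0_def restr_norm_def L2_set_def by simp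
    have rpos: "r > 0" using rg g0 by (meson less_le_trans real_sqrt_gt_zero)
    have r2: "r\<^sup>2 \<ge> \<gamma>"
    proof -
      have "(sqrt \<gamma>)\<^sup>2 \<le> r\<^sup>2" using rg g0 by (intro power_mono) auto
      then show ?thesis using g0 by simp
    qed
    define yv where "yv = (\<lambda>i. v i / r)"
    have r2s: "r\<^sup>2 = (\<Sum>i\<in>S0. (v i)\<^sup>2)" unfolding r_def by (rule L2_sq)
    have yv1: "(\<Sum>i\<in>S0. (yv i)\<^sup>2) = 1"
    proof -
      have "(\<Sum>i\<in>S0. (yv i)\<^sup>2) = (\<Sum>i\<in>S0. (v i)\<^sup>2) / r\<^sup>2"
        unfolding yv_def by (simp add: power_divide sum_divide_distrib)
      also have "\<dots> = r\<^sup>2 / r\<^sup>2" unfolding r2s ..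
      also have "\<dots> = 1" using rpos by simp
      finally show ?thesis .
    qed
    have vyv: "(\<Sum>i\<in>S0. v i * yv i) = r"
    proof -
      have "(\<Sum>i\<in>S0. v i * yv i) = (\<Sum>i\<in>S0. (v i)\<^sup>2) / r"
        unfolding yv_def by (simp add: power2_eq_square sum_divide_distrib)
      also have "\<dots> = r\<^sup>2 / r" unfolding r2s ..
      also have "\<dots> = r" using rpos by (simp add: power2_eq_square)
      finally show ?thesis .
    qed
    have "qf G S0 yv yv = \<theta> * r\<^sup>2 + qf W S0 yv yv"
      using qf_G[OF GW, of S0 yv] vyv by simp
    moreover have "qf W S0 yv yv \<ge> - \<epsilon>" using qWb[OF yv1] by linarith
    moreover have "\<theta> * r\<^sup>2 \<ge> \<theta> * \<gamma>" using r2 th by simp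
    ultimately have mulb: "\<mu> \<ge> \<theta> * \<gamma> - \<epsilon>" using ray yv1 by fastforce
    define b where "b = (\<Sum>i\<in>S0. v i * w 0 i)"
    have "qf G S0 (w 0) (w 0) = (\<Sum>i\<in>S0. w 0 i * (lam * w 0 i))"
      unfolding qf_def using eig by (intro sum.cong) auto
    also have "\<dots> = lam * (\<Sum>i\<in>S0. (w 0 i)\<^sup>2)"
      by (simp add: sum_distrib_left power2_eq_square algebra_simps)
    finally have lamq: "lam = qf G S0 (w 0) (w 0)" using w01 by simp
    have "qf G S0 (w 0) (w 0) = \<theta> * b\<^sup>2 + qf W S0 (w 0) (w 0)"
      unfolding b_def by (rule qf_G[OF GW])
    moreover have "qf W S0 (w 0) (w 0) \<le> \<epsilon>" using qWb[OF w01] by linarith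
    ultimately have "\<theta> * b\<^sup>2 \<ge> \<theta> * \<gamma> - 2 * \<epsilon>" using lamq mula mulb by linarith
    moreover have "\<theta> * (\<gamma> / 2) = \<theta> * \<gamma> / 2" by simp
    ultimately have "\<theta> * b\<^sup>2 \<ge> \<theta> * (\<gamma> / 2)" using epsb epos by linarith
    then have b2: "b\<^sup>2 \<ge> \<gamma> / 2" using th by simp
    have "(\<gamma> / 2)\<^sup>2 \<le> \<gamma> / 2"
    proof -
      have "(\<gamma> / 2)\<^sup>2 = (\<gamma> / 2) * (\<gamma> / 2)" by (simp add: power2_eq_square)
      also have "\<dots> \<le> (\<gamma> / 2) * 1" using g0 g1 by (intro mult_left_mono) auto
      finally show ?thesis by simp
    qed
    then have "(\<gamma> / 2)\<^sup>2 \<le> b\<^sup>2" using b2 by linarith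
    then have bb: "\<gamma> / 2 \<le> \<bar>b\<bar>" using g0 abs_le_square_iff[of "\<gamma>/2" b] by simp
    have a0b: "vdot n (w 0) v = b"
    proof -
      have "vdot n (w 0) v = (\<Sum>i\<in>S0. w 0 i * v i)"
        unfolding vdot_def by (rule sum.mono_neutral_right) (use S0n w0out in auto)
      then show ?thesis unfolding b_def by (simp add: mult.commute)
    qed
    define P where "P = (\<lambda>t. L2_set (w t) {..<n} = 1 \<and> card {j. j < n \<and> w t j \<noteq> 0} \<le> k'
                           \<and> \<gamma> / 2 \<le> \<bar>vdot n (w t) v\<bar>)"
    have P0: "P 0"
    proof -
      have "L2_set (w 0) {..<n} = L2_set (w 0) S0"
        by (rule L2_zero_outside) (use S0n w0out in auto)
      also have "\<dots> = 1" using w01 unfolding L2_set_def by simp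
      finally have l1: "L2_set (w 0) {..<n} = 1" .
      have "{j. j < n \<and> w 0 j \<noteq> 0} \<subseteq> S0" using w0out by auto
      then have "card {j. j < n \<and> w 0 j \<noteq> 0} \<le> card S0" using fS0 by (rule card_mono[rotated])
      then have "card {j. j < n \<and> w 0 j \<noteq> 0} \<le> k'" using cS0 kk by simp
      then show ?thesis unfolding P_def using l1 a0b bb by simp
    qed
    define B where "B = 8 * \<epsilon> / (\<theta> * \<gamma>)"
    have Bh: "B \<le> 1 / 2" unfolding B_def using epsb th g0 by (simp add: divide_le_eq)
    have vnL: "L2_set v {..<n} = 1" using vn by (simp add: vnorm_L2)
    have Vc': "card {i. i < n \<and> v i \<noteq> 0} \<le> k'" using Vc kk by simp
    have stepP: "P (Suc t) \<and> sin_angle n (w (Suc t)) v \<le> B" if Pt: "P t" for t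
    proof -
      obtain TT where top: "top_set n k' (matvec n (Gamma_hat m x) (w t)) TT"
        and wS: "w (Suc t) = (\<lambda>i. hard_thr TT (matvec n (Gamma_hat m x) (w t)) i
                      / vnorm n (hard_thr TT (matvec n (Gamma_hat m x) (w t))))"
        using TP unfolding TPower_run_def by blast
      have l1: "L2_set (w t) {..<n} = 1" and ct: "card {j. j < n \<and> w t j \<noteq> 0} \<le> k'"
        and at: "\<gamma> / 2 \<le> \<bar>vdot n (w t) v\<bar>" using Pt unfolding P_def by auto
      have a4: "4 * \<epsilon> \<le> \<theta> * \<bar>vdot n (w t) v\<bar>"
      proof -
        have "\<theta> * (\<gamma> / 2) \<le> \<theta> * \<bar>vdot n (w t) v\<bar>" using at th by simp
        moreover have "\<theta> * (\<gamma> / 2) = \<theta> * \<gamma> / 2" by simp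
        ultimately show ?thesis using epsb epos by linarith
      qed
      have st: "sin_angle n (w (Suc t)) v \<le> 4 * \<epsilon> / (\<theta> * \<bar>vdot n (w t) v\<bar>)
              \<and> vnorm n (w (Suc t)) = 1"
        unfolding wS
        using tp_step[OF th epos vnL Vc' l1 ct GW top[folded G_def] Eb a4] unfolding G_def .
      have "4 * \<epsilon> / (\<theta> * \<bar>vdot n (w t) v\<bar>) \<le> 4 * \<epsilon> / (\<theta> * (\<gamma> / 2))"
        using at th g0 epos by (intro divide_left_mono mult_left_mono mult_pos_pos) auto
      also have "\<dots> = B" unfolding B_def by simp
      finally have sB: "sin_angle n (w (Suc t)) v \<le> B" using st by linarith
      have l1': "L2_set (w (Suc t)) {..<n} = 1" using st by (simp add: vnorm_L2)
      have "{j. j < n \<and> w (Suc t) j \<noteq> 0} \<subseteq> TT" unfolding wS hard_thr_def by auto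
      moreover have "finite TT" "card TT \<le> k'" using top unfolding top_set_def
        by (auto intro: finite_subset)
      ultimately have ct': "card {j. j < n \<and> w (Suc t) j \<noteq> 0} \<le> k'"
        by (meson card_mono order_trans)
      define a' where "a' = vdot n (w (Suc t)) v"
      have "sqrt (1 - a'\<^sup>2) \<le> 1 / 2" using sB Bh unfolding sin_angle_def a'_def by linarith
      then have "1 - a'\<^sup>2 \<le> 1 / 4"
      proof (cases "1 - a'\<^sup>2 \<ge> 0")
        case True
        assume h: "sqrt (1 - a'\<^sup>2) \<le> 1 / 2"
        have "(sqrt (1 - a'\<^sup>2))\<^sup>2 \<le> (1/2)\<^sup>2" using h True by (intro power_mono) auto
        then show ?thesis using True by (simp add: power_divide)
      next
        case False
        then show ?thesis by linarith
      qed
      then have "(\<gamma> / 2)\<^sup>2 \<le> a'\<^sup>2"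
      proof -
        assume "1 - a'\<^sup>2 \<le> 1 / 4"
        moreover have "(\<gamma> / 2)\<^sup>2 \<le> 1 / 4"
        proof -
          have "(\<gamma> / 2)\<^sup>2 = \<gamma> * \<gamma> / 4" by (simp add: power2_eq_square)
          also have "\<gamma> * \<gamma> \<le> 1 * 1" using g0 g1 by (intro mult_mono) auto
          then have "\<gamma> * \<gamma> / 4 \<le> 1 / 4" by simp
          finally show ?thesis .
        qed
        ultimately show ?thesis by linarith
      qed
      then have "\<gamma> / 2 \<le> \<bar>a'\<bar>" using g0 abs_le_square_iff[of "\<gamma>/2" a'] by simp
      then show ?thesis using sB l1' ct' unfolding P_def a'_def by simp
    qed
    have allP: "P t" for t
      by (induction t) (use P0 stepP in auto)
    obtain t where Tt: "T = Suc t" using T1 by (cases T) auto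
    have "sin_angle n (w T) v \<le> B" using stepP[OF allP[of t]] Tt by simp
    also have "B = C2 * (1 + \<theta>) / (\<theta> * \<gamma>) * \<delta>"
      unfolding B_def \<epsilon>_def C2_def by simp
    finally show ?thesis unfolding \<delta>_def .
  qed
  show ?thesis
    apply (rule exI[of _ C1])
    apply (rule conjI[OF C1pos])
    apply (rule exI[of _ C2])
    apply (rule conjI[OF C2pos])
    apply (intro allI impI)
    apply (rule main)
     apply assumption+
    done
qed

end
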